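(* Let $\mathcal{K}$ be a finite-dimensional complex Hilbert space and $\mathcal{E}$ a completely positive trace-preserving map on the operators of $\mathcal{K}$ admitting a Kraus (operator-sum) representation $\mathcal{E}(\rho)=\sum_{i}V_i\rho V_i^\dagger$ in which one term is $V_1=\sqrt{\alpha}\,I$ with $\alpha>0$. Then, viewing $\mathcal{E}$ as a linear map on the space of operators on $\mathcal{K}$, the only eigenvalue of $\mathcal{E}$ of modulus one can be $1$. *)

theory Defs
  imports "Jordan_Normal_Form.Schur_Decomposition"
begin

definition kraus_map :: "nat \<Rightarrow> complex mat list \<Rightarrow> complex mat \<Rightarrow> complex mat" where
  "kraus_map n Vs \<rho> = foldr (\<lambda>V acc. V * \<rho> * mat_adjoint V + acc) Vs (0\<^sub>m n n)"

definition mat_trace :: "complex mat \<Rightarrow> complex" where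
  "mat_trace A = (\<Sum>i<dim_row A. A $$ (i, i))"

definition trace_preserving :: "nat \<Rightarrow> (complex mat \<Rightarrow> complex mat) \<Rightarrow> bool" where
  "trace_preserving n E \<longleftrightarrow> (\<forall>\<rho> \<in> carrier_mat n n. mat_trace (E \<rho>) = mat_trace \<rho>)"

definition superop_eigenvalue :: "nat \<Rightarrow> (complex mat \<Rightarrow> complex mat) \<Rightarrow> complex \<Rightarrow> bool" where
  "superop_eigenvalue n E \<mu> \<longleftrightarrow>
     (\<exists>\<rho> \<in> carrier_mat n n. \<rho> \<noteq> 0\<^sub>m n n \<and> E \<rho> = \<mu> \<cdot>\<^sub>m \<rho>)"

end

theory Submission
  imports Defs
begin
lemma adj_idx: "i < dim_col V \<Longrightarrow> j < dim_row V \<Longrightarrow> mat_adjoint V $$ (i,j) = cnj (V $$ (j,i))"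
  "dim_row (mat_adjoint V) = dim_col V" "dim_col (mat_adjoint V) = dim_row V"
  unfolding mat_adjoint_def by (auto simp: mat_of_rows_def)

definition kt :: "nat \<Rightarrow> complex mat \<Rightarrow> (nat \<Rightarrow> nat \<Rightarrow> complex) \<Rightarrow> nat \<Rightarrow> nat \<Rightarrow> complex" where
  "kt n V r a b = (\<Sum>c<n. \<Sum>d<n. V$$(a,c) * r c d * cnj (V$$(b,d)))"

lemma K_entry:
  assumes "V \<in> carrier_mat n n" "\<rho> \<in> carrier_mat n n" "a < n" "b < n"
  shows "(V * \<rho> * mat_adjoint V) $$ (a,b) = kt n V (\<lambda>c d. \<rho> $$ (c,d)) a b"
proof -
  have "(V * \<rho> * mat_adjoint V) $$ (a,b) = (\<Sum>d<n. (V * \<rho>) $$ (a,d) * cnj (V $$ (b,d)))"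
    using assms by (simp add: index_mult_mat scalar_prod_def adj_idx lessThan_atLeast0)
  also have "\<dots> = (\<Sum>d<n. \<Sum>c<n. V$$(a,c) * \<rho>$$(c,d) * cnj (V$$(b,d)))"
    using assms by (intro sum.cong refl) (simp add: index_mult_mat scalar_prod_def lessThan_atLeast0 sum_distrib_right)
  also have "\<dots> = kt n V (\<lambda>c d. \<rho> $$ (c,d)) a b"
    unfolding kt_def by (rule sum.swap)
  finally show ?thesis .
qed

lemma kraus_entry:
  assumes "\<forall>V \<in> set Vs. V \<in> carrier_mat n n" "\<rho> \<in> carrier_mat n n"
  shows "kraus_map n Vs \<rho> \<in> carrier_mat n n \<and> (\<forall>a<n. \<forall>b<n. kraus_map n Vs \<rho> $$ (a,b) =
     (\<Sum>i<length Vs. kt n (Vs!i) (\<lambda>c d. \<rho> $$ (c,d)) a b))"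
  using assms(1)
proof (induction Vs)
  case Nil
  then show ?case by (simp add: kraus_map_def)
next
  case (Cons V Vs)
  have eq: "kraus_map n (V # Vs) \<rho> = V * \<rho> * mat_adjoint V + kraus_map n Vs \<rho>"
    by (simp add: kraus_map_def)
  have V: "V \<in> carrier_mat n n" using Cons by auto
  have IH: "kraus_map n Vs \<rho> \<in> carrier_mat n n \<and> (\<forall>a<n. \<forall>b<n. kraus_map n Vs \<rho> $$ (a,b) =
     (\<Sum>i<length Vs. kt n (Vs!i) (\<lambda>c d. \<rho> $$ (c,d)) a b))" using Cons by auto
  have adjc: "mat_adjoint V \<in> carrier_mat n n" using V
    unfolding carrier_mat_def by (simp add: adj_idx)
  have c1: "V * \<rho> * mat_adjoint V \<in> carrier_mat n n"
    using V assms(2) adjc by (meson mult_carrier_mat)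
  show ?case
  proof
    show "kraus_map n (V # Vs) \<rho> \<in> carrier_mat n n" unfolding eq using IH c1 by simp
    show "\<forall>a<n. \<forall>b<n. kraus_map n (V # Vs) \<rho> $$ (a, b) =
      (\<Sum>i<length (V # Vs). kt n ((V # Vs) ! i) (\<lambda>c d. \<rho> $$ (c, d)) a b)"
    proof (intro allI impI)
      fix a b assume ab: "a < n" "b < n"
      have "kraus_map n (V # Vs) \<rho> $$ (a, b) = (V * \<rho> * mat_adjoint V) $$ (a,b) + kraus_map n Vs \<rho> $$ (a,b)"
        unfolding eq using IH c1 ab by (metis carrier_matD index_add_mat(1))
      also have "\<dots> = kt n V (\<lambda>c d. \<rho> $$ (c, d)) a b + (\<Sum>i<length Vs. kt n (Vs!i) (\<lambda>c d. \<rho> $$ (c,d)) a b)"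
        using IH K_entry[OF V assms(2) ab] ab by simp
      also have "\<dots> = (\<Sum>i<length (V # Vs). kt n ((V # Vs) ! i) (\<lambda>c d. \<rho> $$ (c, d)) a b)"
        by (simp only: length_Cons sum.lessThan_Suc_shift nth_Cons_0 nth_Cons_Suc)
      finally show "kraus_map n (V # Vs) \<rho> $$ (a, b) = (\<Sum>i<length (V # Vs). kt n ((V # Vs) ! i) (\<lambda>c d. \<rho> $$ (c, d)) a b)" .
    qed
  qed
qed

definition vn :: "nat \<Rightarrow> (nat \<Rightarrow> complex) \<Rightarrow> real" where
  "vn n x = sqrt (\<Sum>a<n. (cmod (x a))^2)"
definition mv :: "nat \<Rightarrow> complex mat \<Rightarrow> (nat \<Rightarrow> complex) \<Rightarrow> nat \<Rightarrow> complex" where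
  "mv n V x = (\<lambda>a. \<Sum>c<n. V$$(a,c) * x c)"
definition decomp :: "nat \<Rightarrow> nat set \<Rightarrow> (nat \<Rightarrow> nat \<Rightarrow> complex) \<Rightarrow> (nat \<Rightarrow> nat \<Rightarrow> complex) \<Rightarrow> (nat \<Rightarrow> nat \<Rightarrow> complex) \<Rightarrow> bool" where
  "decomp n J xs ys f \<longleftrightarrow> finite J \<and> (\<forall>a<n. \<forall>b<n. f a b = (\<Sum>j\<in>J. xs j a * cnj (ys j b)))"
definition cost :: "nat \<Rightarrow> nat set \<Rightarrow> (nat \<Rightarrow> nat \<Rightarrow> complex) \<Rightarrow> (nat \<Rightarrow> nat \<Rightarrow> complex) \<Rightarrow> real" where
  "cost n J xs ys = (\<Sum>j\<in>J. vn n (xs j) * vn n (ys j))"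

lemma kt_decomp:
  assumes "decomp n J xs ys f" "a < n" "b < n"
  shows "kt n V f a b = (\<Sum>j\<in>J. mv n V (xs j) a * cnj (mv n V (ys j) b))"
proof -
  have "kt n V f a b = (\<Sum>c<n. \<Sum>d<n. V$$(a,c) * (\<Sum>j\<in>J. xs j c * cnj (ys j d)) * cnj (V$$(b,d)))"
    unfolding kt_def using assms(1) unfolding decomp_def by (intro sum.cong refl) auto
  also have "\<dots> = (\<Sum>c<n. \<Sum>d<n. \<Sum>j\<in>J. V$$(a,c) * xs j c * (cnj (V$$(b,d)) * cnj (ys j d)))"
    unfolding sum_distrib_left sum_distrib_right by (intro sum.cong refl) (simp add: mult_ac)
  also have "\<dots> = (\<Sum>c<n. \<Sum>j\<in>J. \<Sum>d<n. V$$(a,c) * xs j c * (cnj (V$$(b,d)) * cnj (ys j d)))"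
    by (rule sum.cong[OF refl]) (rule sum.swap)
  also have "\<dots> = (\<Sum>j\<in>J. \<Sum>c<n. \<Sum>d<n. V$$(a,c) * xs j c * (cnj (V$$(b,d)) * cnj (ys j d)))"
    by (rule sum.swap)
  also have "\<dots> = (\<Sum>j\<in>J. mv n V (xs j) a * cnj (mv n V (ys j) b))"
    unfolding mv_def by (simp add: cnj_sum sum_product)
  finally show ?thesis .
qed

lemma enc_inj: "inj_on (\<lambda>(j,i). j*m+i) (J \<times> {..<(m::nat)})"
proof (rule inj_onI, clarsimp)
  fix j i j' i' assume "i < m" "i' < m" "j*m+i = j'*m+i'"
  then have "(j*m+i) mod m = (j'*m+i') mod m" "(j*m+i) div m = (j'*m+i') div m" by simp_all
  then show "j = j' \<and> i = i'" using \<open>i<m\<close> \<open>i'<m\<close> by simp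
qed

lemma sum_enc:
  "(\<Sum>k\<in>(\<lambda>(j,i). j*m+i) ` (J \<times> {..<(m::nat)}). h (k div m) (k mod m)) = (\<Sum>j\<in>J. \<Sum>i<m. (h j i :: 'a::comm_monoid_add))"
proof -
  have "(\<Sum>k\<in>(\<lambda>(j,i). j*m+i) ` (J \<times> {..<m}). h (k div m) (k mod m))
      = (\<Sum>p\<in>J \<times> {..<m}. h ((fst p * m + snd p) div m) ((fst p * m + snd p) mod m))"
    by (subst sum.reindex[OF enc_inj]) (simp add: case_prod_beta)
  also have "\<dots> = (\<Sum>p\<in>J \<times> {..<m}. h (fst p) (snd p))"
    by (rule sum.cong) auto
  also have "\<dots> = (\<Sum>j\<in>J. \<Sum>i<m. h j i)"
    by (simp add: sum.cartesian_product case_prod_beta)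
  finally show ?thesis .
qed

lemma decomp_map:
  assumes "decomp n J xs ys f"
  shows "decomp n ((\<lambda>(j,i). j*length Ws+i) ` (J \<times> {..<length Ws}))
      (\<lambda>k. mv n (Ws!(k mod length Ws)) (xs (k div length Ws)))
      (\<lambda>k. mv n (Ws!(k mod length Ws)) (ys (k div length Ws)))
      (\<lambda>a b. \<Sum>i<length Ws. kt n (Ws!i) f a b)
   \<and> cost n ((\<lambda>(j,i). j*length Ws+i) ` (J \<times> {..<length Ws}))
      (\<lambda>k. mv n (Ws!(k mod length Ws)) (xs (k div length Ws)))
      (\<lambda>k. mv n (Ws!(k mod length Ws)) (ys (k div length Ws)))
    = (\<Sum>j\<in>J. \<Sum>i<length Ws. vn n (mv n (Ws!i) (xs j)) * vn n (mv n (Ws!i) (ys j)))"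
proof -
  let ?m = "length Ws"
  have fin: "finite J" using assms unfolding decomp_def by auto
  have "\<forall>a<n. \<forall>b<n. (\<Sum>i<?m. kt n (Ws!i) f a b) = (\<Sum>k\<in>(\<lambda>(j,i). j*?m+i) ` (J \<times> {..<?m}).
      mv n (Ws!(k mod ?m)) (xs (k div ?m)) a * cnj (mv n (Ws!(k mod ?m)) (ys (k div ?m)) b))"
  proof (intro allI impI)
    fix a b assume ab: "a < n" "b < n"
    have "(\<Sum>i<?m. kt n (Ws!i) f a b) = (\<Sum>i<?m. \<Sum>j\<in>J. mv n (Ws!i) (xs j) a * cnj (mv n (Ws!i) (ys j) b))"
      using kt_decomp[OF assms ab] by simp
    also have "\<dots> = (\<Sum>j\<in>J. \<Sum>i<?m. mv n (Ws!i) (xs j) a * cnj (mv n (Ws!i) (ys j) b))"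
      by (rule sum.swap)
    also have "\<dots> = (\<Sum>k\<in>(\<lambda>(j,i). j*?m+i) ` (J \<times> {..<?m}).
      mv n (Ws!(k mod ?m)) (xs (k div ?m)) a * cnj (mv n (Ws!(k mod ?m)) (ys (k div ?m)) b))"
      by (rule sum_enc[of "\<lambda>j i. mv n (Ws!i) (xs j) a * cnj (mv n (Ws!i) (ys j) b)", symmetric])
    finally show "(\<Sum>i<?m. kt n (Ws!i) f a b) = (\<Sum>k\<in>(\<lambda>(j,i). j*?m+i) ` (J \<times> {..<?m}).
      mv n (Ws!(k mod ?m)) (xs (k div ?m)) a * cnj (mv n (Ws!(k mod ?m)) (ys (k div ?m)) b))" .
  qed
  moreover have "finite ((\<lambda>(j,i). j*?m+i) ` (J \<times> {..<?m}))" using fin by simp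
  ultimately show ?thesis unfolding decomp_def cost_def
    using sum_enc[of "\<lambda>j i. vn n (mv n (Ws!i) (xs j)) * vn n (mv n (Ws!i) (ys j))" ?m J] by simp
qed

lemma cs_sum:
  fixes u v :: "nat \<Rightarrow> real"
  assumes "finite I"
  shows "(\<Sum>i\<in>I. u i * v i) \<le> sqrt (\<Sum>i\<in>I. (u i)^2) * sqrt (\<Sum>i\<in>I. (v i)^2)"
proof -
  define A where "A = (\<Sum>i\<in>I. (u i)^2)"
  define B where "B = (\<Sum>i\<in>I. (v i)^2)"
  define S where "S = (\<Sum>i\<in>I. u i * v i)"
  have A0: "A \<ge> 0" "B \<ge> 0" unfolding A_def B_def by (simp_all add: sum_nonneg)
  show ?thesis
  proof (cases "A = 0 \<or> B = 0")
    case True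
    then have "S = 0"
    proof
      assume "A = 0"
      then have "\<forall>i\<in>I. (u i)^2 = 0" unfolding A_def using assms by (simp add: sum_nonneg_eq_0_iff)
      then show "S = 0" unfolding S_def by simp
    next
      assume "B = 0"
      then have "\<forall>i\<in>I. (v i)^2 = 0" unfolding B_def using assms by (simp add: sum_nonneg_eq_0_iff)
      then show "S = 0" unfolding S_def by simp
    qed
    then show ?thesis unfolding S_def[symmetric] A_def[symmetric] B_def[symmetric] using A0 by simp
  next
    case False
    then have pos: "sqrt A * sqrt B > 0" using A0 by simp
    have sAz: "sqrt A * (sqrt A * z) = A * z" "sqrt B * (sqrt B * z) = B * z" for z
      using A0 by (simp_all add: mult.assoc[symmetric])
    have "0 \<le> (\<Sum>i\<in>I. (u i * sqrt B - v i * sqrt A)^2)" by (simp add: sum_nonneg)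
    also have "\<dots> = (\<Sum>i\<in>I. (u i)^2 * B - 2 * (sqrt A * sqrt B) * (u i * v i) + (v i)^2 * A)"
      by (rule sum.cong) (simp_all add: power2_eq_square algebra_simps sAz)
    also have "\<dots> = (\<Sum>i\<in>I. (u i)^2) * B - 2 * (sqrt A * sqrt B) * (\<Sum>i\<in>I. u i * v i) + (\<Sum>i\<in>I. (v i)^2) * A"
      by (simp add: sum.distrib sum_subtractf sum_distrib_left sum_distrib_right)
    also have "\<dots> = A * B - 2 * (sqrt A * sqrt B) * S + B * A"
      unfolding A_def B_def S_def ..
    finally have "(sqrt A * sqrt B) * S \<le> (sqrt A * sqrt B) * (sqrt A * sqrt B)"
      using A0 by (simp add: real_sqrt_mult[symmetric] algebra_simps)
    then have "S \<le> sqrt A * sqrt B" using pos by (rule mult_left_le_imp_le)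
    then show ?thesis unfolding S_def A_def B_def .
  qed
qed

lemma cost_bound:
  assumes "\<forall>x. (\<Sum>i<length Ws. (vn n (mv n (Ws!i) x))^2) = \<beta> * (vn n x)^2" "\<beta> \<ge> 0"
  shows "(\<Sum>i<length Ws. vn n (mv n (Ws!i) x) * vn n (mv n (Ws!i) y)) \<le> \<beta> * vn n x * vn n y"
proof -
  have vn0: "vn n z \<ge> 0" for z unfolding vn_def by (simp add: sum_nonneg)
  have "(\<Sum>i<length Ws. vn n (mv n (Ws!i) x) * vn n (mv n (Ws!i) y))
      \<le> sqrt (\<beta> * (vn n x)^2) * sqrt (\<beta> * (vn n y)^2)"
    using cs_sum[of "{..<length Ws}" "\<lambda>i. vn n (mv n (Ws!i) x)" "\<lambda>i. vn n (mv n (Ws!i) y)"] assms(1)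
    by simp
  also have "\<dots> = \<beta> * vn n x * vn n y"
    using assms(2) vn0[of x] vn0[of y] by (simp add: real_sqrt_mult)
  finally show ?thesis .
qed

lemma zc: "z * cnj z = complex_of_real ((cmod z)^2)"
  by (simp add: complex_mult_cnj cmod_def)

lemma vn_sq: "(vn n y)^2 = (\<Sum>a<n. (cmod (y a))^2)"
  unfolding vn_def by (simp add: sum_nonneg)

lemma trace_id:
  assumes "\<forall>V \<in> set Vs. V \<in> carrier_mat n n" "trace_preserving n (kraus_map n Vs)"
  shows "(\<Sum>i<length Vs. (vn n (mv n (Vs!i) x))^2) = (vn n x)^2"
proof -
  define \<rho> where "\<rho> = mat n n (\<lambda>(a,b). x a * cnj (x b))"
  have rc: "\<rho> \<in> carrier_mat n n" unfolding \<rho>_def by simp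
  have dc: "decomp n {0} (\<lambda>_. x) (\<lambda>_. x) (\<lambda>c d. \<rho> $$ (c,d))"
    unfolding decomp_def \<rho>_def by simp
  note KE = kraus_entry[OF assms(1) rc]
  have "mat_trace (kraus_map n Vs \<rho>) = (\<Sum>a<n. kraus_map n Vs \<rho> $$ (a,a))"
    unfolding mat_trace_def using KE by (metis carrier_matD(1))
  also have "\<dots> = (\<Sum>a<n. \<Sum>i<length Vs. mv n (Vs!i) x a * cnj (mv n (Vs!i) x a))"
    using KE kt_decomp[OF dc] by (intro sum.cong refl) simp
  also have "\<dots> = complex_of_real (\<Sum>i<length Vs. (vn n (mv n (Vs!i) x))^2)"
    by (simp add: zc vn_sq sum.swap[of _ "{..<n}"])
  finally have 1: "mat_trace (kraus_map n Vs \<rho>) = complex_of_real (\<Sum>i<length Vs. (vn n (mv n (Vs!i) x))^2)" .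
  have 2: "mat_trace \<rho> = complex_of_real ((vn n x)^2)"
    unfolding mat_trace_def \<rho>_def by (simp add: zc vn_sq)
  have "complex_of_real (\<Sum>i<length Vs. (vn n (mv n (Vs!i) x))^2) = complex_of_real ((vn n x)^2)"
    using 1 2 assms(2) rc unfolding trace_preserving_def by metis
  then show ?thesis by (simp only: of_real_eq_iff)
qed

lemma vn_ge: "a < n \<Longrightarrow> cmod (x a) \<le> vn n x"
proof -
  assume a: "a < n"
  have "(cmod (x a))^2 \<le> (\<Sum>a<n. (cmod (x a))^2)"
    using a by (intro member_le_sum) auto
  then have "sqrt ((cmod (x a))^2) \<le> vn n x" unfolding vn_def by (rule real_sqrt_le_mono)
  then show ?thesis by simp
qed

lemma vn_nonneg: "vn n x \<ge> 0" unfolding vn_def by (simp add: sum_nonneg)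

lemma lower_bound:
  assumes "decomp n J xs ys f" "a < n" "b < n"
  shows "cmod (f a b) \<le> cost n J xs ys"
proof -
  have "cmod (f a b) = cmod (\<Sum>j\<in>J. xs j a * cnj (ys j b))" using assms unfolding decomp_def by simp
  also have "\<dots> \<le> (\<Sum>j\<in>J. cmod (xs j a * cnj (ys j b)))" by (rule norm_sum)
  also have "\<dots> \<le> cost n J xs ys" unfolding cost_def
    by (rule sum_mono) (simp add: norm_mult mult_mono vn_ge assms vn_nonneg)
  finally show ?thesis .
qed

lemma scale_decomp:
  assumes "decomp n J xs ys (\<lambda>a b. \<nu> * f a b)" "\<nu> \<noteq> 0"
  shows "decomp n J (\<lambda>j a. xs j a / \<nu>) ys f \<and> cost n J (\<lambda>j a. xs j a / \<nu>) ys = cost n J xs ys / cmod \<nu>"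
proof
  show "decomp n J (\<lambda>j a. xs j a / \<nu>) ys f"
    using assms unfolding decomp_def
    by (auto simp: sum_divide_distrib[symmetric] field_simps)
  have "vn n (\<lambda>a. x a / \<nu>) = vn n x / cmod \<nu>" for x
  proof -
    have "(\<Sum>a<n. (cmod (x a / \<nu>))^2) = (\<Sum>a<n. (cmod (x a))^2) / (cmod \<nu>)^2"
      by (simp add: norm_divide power_divide sum_divide_distrib)
    then show ?thesis unfolding vn_def by (simp add: real_sqrt_divide)
  qed
  then show "cost n J (\<lambda>j a. xs j a / \<nu>) ys = cost n J xs ys / cmod \<nu>"
    unfolding cost_def by (simp add: sum_divide_distrib)
qed

lemma exists_decomp:
  "decomp n {..<n} (\<lambda>c a. \<rho> $$ (a,c)) (\<lambda>c b. if b = c then 1 else 0) (\<lambda>a b. \<rho> $$ (a,b))"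
  unfolding decomp_def by (simp add: if_distrib cong: if_cong)

lemma final_step:
  assumes "cmod \<mu> = 1" "\<alpha> > 0" "cmod (\<mu> - complex_of_real \<alpha>) \<le> 1 - \<alpha>"
  shows "\<mu> = 1"
proof -
  have h1: "(Re \<mu>)^2 + (Im \<mu>)^2 = 1" using assms(1) unfolding cmod_def
    by (metis one_power2 real_sqrt_eq_1_iff)
  have nn: "1 - \<alpha> \<ge> 0" using assms(3) norm_ge_zero order_trans by blast
  have "(cmod (\<mu> - complex_of_real \<alpha>))^2 \<le> (1 - \<alpha>)^2"
    using assms(3) by (simp add: power_mono)
  then have h2: "(Re \<mu> - \<alpha>)^2 + (Im \<mu>)^2 \<le> (1 - \<alpha>)^2"
    unfolding cmod_def by simp
  have "Re \<mu> \<ge> 1" using h1 h2 assms(2) by (simp add: power2_eq_square algebra_simps)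
  moreover have "Re \<mu> \<le> 1" using h1 by (smt (verit) zero_le_power2 one_power2 power2_le_imp_le)
  ultimately have "Re \<mu> = 1" by simp
  with h1 have "Im \<mu> = 0" by simp
  with \<open>Re \<mu> = 1\<close> show ?thesis by (simp add: complex_eq_iff)
qed

theorem lemma2:
  fixes n :: nat and Vs :: "complex mat list" and \<alpha> :: real and \<mu> :: complex
  assumes "\<forall>V \<in> set Vs. V \<in> carrier_mat n n"
    and "Vs \<noteq> []"
    and "\<alpha> > 0"
    and "hd Vs = complex_of_real (sqrt \<alpha>) \<cdot>\<^sub>m 1\<^sub>m n"
    and "trace_preserving n (kraus_map n Vs)"
    and "superop_eigenvalue n (kraus_map n Vs) \<mu>"
    and "cmod \<mu> = 1"
  shows "\<mu> = 1"
proof -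
  obtain V1 Ws where Vs: "Vs = V1 # Ws" using assms(2) by (cases Vs) auto
  have V1: "V1 = complex_of_real (sqrt \<alpha>) \<cdot>\<^sub>m 1\<^sub>m n" using assms(4) Vs by simp
  have Wc: "\<forall>V \<in> set Ws. V \<in> carrier_mat n n" using assms(1) Vs by simp
  let ?m = "length Ws"
  obtain \<rho> where rc: "\<rho> \<in> carrier_mat n n" and rnz: "\<rho> \<noteq> 0\<^sub>m n n"
    and eig: "kraus_map n Vs \<rho> = \<mu> \<cdot>\<^sub>m \<rho>"
    using assms(6) unfolding superop_eigenvalue_def by blast
  define f where "f = (\<lambda>a b. \<rho> $$ (a,b))"
  obtain a0 b0 where ab0: "a0 < n" "b0 < n" "f a0 b0 \<noteq> 0"
  proof -
    have "\<exists>a<n. \<exists>b<n. f a b \<noteq> 0"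
    proof (rule ccontr)
      assume "\<not> ?thesis"
      then have "\<rho> = 0\<^sub>m n n" using rc unfolding f_def by (intro eq_matI) auto
      with rnz show False by simp
    qed
    then show ?thesis using that by blast
  qed
  define \<nu> where "\<nu> = \<mu> - complex_of_real \<alpha>"
  have V1e: "a < n \<Longrightarrow> c < n \<Longrightarrow> V1 $$ (a,c) = (if a = c then complex_of_real (sqrt \<alpha>) else 0)" for a c
    unfolding V1 by simp
  have sa: "complex_of_real (sqrt \<alpha>) * cnj (complex_of_real (sqrt \<alpha>)) = complex_of_real \<alpha>"
    using assms(3) by (simp flip: of_real_mult)
  have ktV1: "kt n V1 g a b = complex_of_real \<alpha> * g a b" if "a < n" "b < n" for g a b
  proof -
    have "kt n V1 g a b = (\<Sum>c<n. \<Sum>d<n. (if a = c then complex_of_real (sqrt \<alpha>) else 0) * g c d *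
        cnj (if b = d then complex_of_real (sqrt \<alpha>) else 0))"
      unfolding kt_def using V1e that by (intro sum.cong refl) auto
    also have "\<dots> = complex_of_real (sqrt \<alpha>) * g a b * cnj (complex_of_real (sqrt \<alpha>))"
    proof -
      have i1: "(if P then x else 0) * y = (if P then x * y else (0::complex))" for P x y by simp
      have i2: "y * cnj (if P then x else 0) = (if P then y * cnj x else (0::complex))" for P x y by simp
      show ?thesis using that by (simp add: i1 i2)
    qed
    also have "\<dots> = complex_of_real \<alpha> * g a b" using sa by (simp add: mult_ac)
    finally show ?thesis .
  qed
  have Feq: "(\<Sum>i<?m. kt n (Ws!i) f a b) = \<nu> * f a b" if "a < n" "b < n" for a b
  proof -
    have "kraus_map n Vs \<rho> $$ (a,b) = (\<Sum>i<length Vs. kt n (Vs!i) f a b)"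
      using kraus_entry[OF assms(1) rc] that unfolding f_def by simp
    also have "\<dots> = kt n V1 f a b + (\<Sum>i<?m. kt n (Ws!i) f a b)"
      unfolding Vs by (simp only: length_Cons sum.lessThan_Suc_shift nth_Cons_0 nth_Cons_Suc)
    finally have "\<mu> * f a b = complex_of_real \<alpha> * f a b + (\<Sum>i<?m. kt n (Ws!i) f a b)"
      using eig rc that ktV1 unfolding f_def by simp
    then show ?thesis unfolding \<nu>_def by (simp add: algebra_simps)
  qed
  define \<beta> where "\<beta> = 1 - \<alpha>"
  have Wtr: "(\<Sum>i<?m. (vn n (mv n (Ws!i) x))^2) = \<beta> * (vn n x)^2" for x
  proof -
    have t: "(\<Sum>i<length Vs. (vn n (mv n (Vs!i) x))^2) = (vn n x)^2"
      by (rule trace_id[OF assms(1) assms(5)])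
    have "(vn n (mv n V1 x))^2 = (\<Sum>a<n. (cmod (complex_of_real (sqrt \<alpha>) * x a))^2)"
    proof -
      have "mv n V1 x a = complex_of_real (sqrt \<alpha>) * x a" if "a < n" for a
      proof -
        have "mv n V1 x a = (\<Sum>c<n. if a = c then complex_of_real (sqrt \<alpha>) * x c else 0)"
          unfolding mv_def using V1e that by (intro sum.cong refl) auto
        then show ?thesis using that by simp
      qed
      then show ?thesis unfolding vn_sq by (intro sum.cong refl) auto
    qed
    also have "\<dots> = \<alpha> * (vn n x)^2"
      unfolding vn_sq using assms(3) by (simp add: norm_mult power_mult_distrib sum_distrib_left)
    finally have "(vn n (mv n V1 x))^2 = \<alpha> * (vn n x)^2" .
    with t show ?thesis unfolding Vs \<beta>_def
      by (simp only: length_Cons sum.lessThan_Suc_shift nth_Cons_0 nth_Cons_Suc) (simp add: algebra_simps)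
  qed
  have \<beta>0: "\<beta> \<ge> 0"
  proof -
    define e where "e = (\<lambda>a::nat. if a = a0 then (1::complex) else 0)"
    have "(\<Sum>a<n. (cmod (e a))^2) = (\<Sum>a<n. if a = a0 then 1 else 0)"
      by (intro sum.cong) (auto simp: e_def)
    then have "(vn n e)^2 = 1" unfolding vn_sq using ab0 by simp
    moreover have "(\<Sum>i<?m. (vn n (mv n (Ws!i) e))^2) \<ge> 0" by (simp add: sum_nonneg)
    ultimately show ?thesis using Wtr[of e] by simp
  qed
  have key: "cmod \<nu> \<le> \<beta>"
  proof (rule ccontr)
    assume "\<not> cmod \<nu> \<le> \<beta>"
    then have gt: "cmod \<nu> > \<beta>" by simp
    then have nz: "\<nu> \<noteq> 0" using \<beta>0 by auto
    define r where "r = \<beta> / cmod \<nu>"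
    have r0: "r \<ge> 0" "r < 1" unfolding r_def using gt \<beta>0 nz by (auto simp: divide_less_eq)
    define C where "C = {c. \<exists>J xs ys. decomp n J xs ys f \<and> c = cost n J xs ys}"
    have Cne: "C \<noteq> {}" unfolding C_def f_def using exists_decomp by blast
    have Clb: "c \<ge> cmod (f a0 b0)" if "c \<in> C" for c
      using that lower_bound ab0 unfolding C_def by blast
    have bdd: "bdd_below C" unfolding bdd_below_def using Clb by blast
    have step: "\<exists>c' \<in> C. c' \<le> r * c" if cC: "c \<in> C" for c
    proof -
      obtain J xs ys where d: "decomp n J xs ys f" and c: "c = cost n J xs ys"
        using cC unfolding C_def by blast
      note DM = decomp_map[OF d, of Ws]
      let ?J = "(\<lambda>(j,i). j*?m+i) ` (J \<times> {..<?m})"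
      let ?xs = "\<lambda>k. mv n (Ws!(k mod ?m)) (xs (k div ?m))"
      let ?ys = "\<lambda>k. mv n (Ws!(k mod ?m)) (ys (k div ?m))"
      have d2: "decomp n ?J ?xs ?ys (\<lambda>a b. \<nu> * f a b)"
        using DM Feq unfolding decomp_def by auto
      have "cost n ?J ?xs ?ys \<le> (\<Sum>j\<in>J. \<beta> * vn n (xs j) * vn n (ys j))"
        using DM by (simp add: sum_mono cost_bound[OF _ \<beta>0] Wtr)
      also have "\<dots> = \<beta> * c" unfolding c cost_def by (simp add: sum_distrib_left mult_ac)
      finally have cb: "cost n ?J ?xs ?ys \<le> \<beta> * c" .
      note SD = scale_decomp[OF d2 nz]
      have "cost n ?J (\<lambda>j a. ?xs j a / \<nu>) ?ys \<le> r * c"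
        using SD cb nz unfolding r_def by (simp add: divide_right_mono)
      moreover have "cost n ?J (\<lambda>j a. ?xs j a / \<nu>) ?ys \<in> C" using SD unfolding C_def by blast
      ultimately show ?thesis by blast
    qed
    define N where "N = Inf C"
    have N0: "N \<ge> cmod (f a0 b0)" unfolding N_def using Cne Clb by (intro cInf_greatest) auto
    have Np: "N > 0" using N0 ab0(3) by (meson zero_less_norm_iff less_le_trans)
    have Nle: "N \<le> r * c" if cC: "c \<in> C" for c
    proof -
      obtain c' where "c' \<in> C" "c' \<le> r * c" using step[OF cC] by blast
      then show ?thesis unfolding N_def using bdd by (meson cInf_lower order_trans)
    qed
    show False
    proof (cases "r = 0")
      case True
      obtain c where "c \<in> C" using Cne by blast
      with Nle True Np show False by fastforce
    next
      case False
      then have rp: "r > 0" using r0 by simp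
      have "N / r \<le> N" unfolding N_def
        using Cne Nle rp by (intro cInf_greatest) (auto simp: N_def pos_divide_le_eq mult.commute)
      then have "N \<le> r * N" using rp by (simp add: pos_divide_le_eq mult.commute)
      with Np r0 show False by (smt (verit) mult_less_cancel_right2)
    qed
  qed
  show ?thesis
    using final_step[OF assms(7) assms(3)] key unfolding \<nu>_def \<beta>_def by simp
qed
end
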